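(* Let $f:\mathbb{R}^{N}\rightarrow (-\infty ,\infty ]$ with $m_{f}:=\inf f>-\infty$, and suppose there are constants $c>0$ and $\alpha>0$ such that $f(x)\geq h(x):=c|x|^{\alpha }$ for $|x|$ large enough. Then for every $z<m_{f}$, every open ball $B$ centered at the origin such that $f\geq h\geq 2z$ outside $B$, and every Young function $\phi$, $$\|(\check{f}-z)^{-1}\|_{\phi }\leq 2\|h^{-1}\|_{\phi ,\mathbb{R}^{N}\setminus B}+(m_{f}-z)^{-1}\|\chi_{B}\|_{\phi }.$$ If $\phi$ is invertible with inverse $\psi$, this also reads $$\|(\check{f}-z)^{-1}\|_{\phi }\leq 2\|h^{-1}\|_{\phi ,\mathbb{R}^{N}\setminus B}+(m_{f}-z)^{-1}[\psi(\mu_{N}(B)^{-1})]^{-1}.$$ In particular, if $\|h^{-1}\|_{\phi,\mathbb{R}^{N}\setminus B}<\infty$, then $\|(\check{f}-z)^{-1}\|_\phi<\infty$.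
   Context: $\mu_N$ is Lebesgue measure, $\chi_B$ the indicator function of $B$. For $k\ge0$, $k^{-1}:=1/k$ (with $1/0=\infty$). A Young function is a nonconstant $\phi:[0,\infty]\to[0,\infty]$ with $\phi(0)=0$, nondecreasing, convex and left continuous; for measurable $k$ on a measurable set $E\subset\mathbb{R}^N$, $\|k\|_{\phi,E}:=\inf\{r>0:\int_{E}\phi(r^{-1}|k|)\le 1\}$ ($=\infty$ if no such $r$), and $\|k\|_\phi:=\|k\|_{\phi,\mathbb{R}^N}$. Enclosing balls: for nonempty bounded $X\subset\mathbb{R}^N$, $\overline{B}_X$ is the unique closed ball of minimal diameter containing $X$; $\overline{B}_X:=\mathbb{R}^N$ if $X$ unbounded; $\overline{B}_\emptyset:=\{0\}$. For $f:\mathbb{R}^N\to[-\infty,\infty]$, $\rho^-_f(\xi)\in[0,\infty]$ is the radius of $\overline{B}_{\{f<\xi\}}$, $\gamma^-_f(t):=\sup\{\xi:\rho^-_f(\xi)\le t\}$ for $t\ge0$, and $\check f(x):=\gamma^-_f(|x|)$. *)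

theory Defs
  imports "HOL-Analysis.Analysis"
begin

definition young_function :: "(ennreal \<Rightarrow> ennreal) \<Rightarrow> bool" where
  "young_function \<phi> \<longleftrightarrow>
     (\<exists>x y. \<phi> x \<noteq> \<phi> y) \<and>
     \<phi> 0 = 0 \<and>
     mono \<phi> \<and>
     (\<forall>x y (t::real). 0 \<le> t \<and> t \<le> 1 \<longrightarrow>
        \<phi> (ennreal t * x + ennreal (1 - t) * y) \<le> ennreal t * \<phi> x + ennreal (1 - t) * \<phi> y) \<and>
     (\<forall>x. (\<phi> \<longlongrightarrow> \<phi> x) (at_left x))"

(* Luxemburg-type norm ||k||_{phi,E} := inf {r>0 : int_E phi(r^{-1}|k|) <= 1}, = \<infinity> if no such r *)
definition orlicz_norm ::
  "(ennreal \<Rightarrow> ennreal) \<Rightarrow> ('a::euclidean_space) set \<Rightarrow> ('a \<Rightarrow> ennreal) \<Rightarrow> ennreal" where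
  "orlicz_norm \<phi> E k =
     Inf {ennreal r | r::real. 0 < r \<and>
            (\<integral>\<^sup>+ x. \<phi> (ennreal (1 / r) * k x) * indicator E x \<partial>lebesgue) \<le> 1}"

(* radius of the minimal enclosing closed ball of X (0 for X = {}, \<infinity> for X unbounded) *)
definition enc_radius :: "('a::euclidean_space) set \<Rightarrow> ennreal" where
  "enc_radius X = Inf {ennreal r | r c. 0 \<le> r \<and> X \<subseteq> cball c r}"

definition rho_minus :: "('a::euclidean_space \<Rightarrow> ereal) \<Rightarrow> ereal \<Rightarrow> ennreal" where
  "rho_minus f \<xi> = enc_radius {x. f x < \<xi>}"

definition gamma_minus :: "('a::euclidean_space \<Rightarrow> ereal) \<Rightarrow> real \<Rightarrow> ereal" where
  "gamma_minus f t = Sup {\<xi>. rho_minus f \<xi> \<le> ennreal t}"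

definition check_fun :: "('a::euclidean_space \<Rightarrow> ereal) \<Rightarrow> 'a \<Rightarrow> ereal" where
  "check_fun f x = gamma_minus f (norm x)"

end

theory Submission
  imports Defs
begin

lemma ennreal_inverse_antimono': "(x::ennreal) \<le> y \<Longrightarrow> inverse y \<le> inverse x"
proof (cases "x = 0")
  case True then show ?thesis by simp
next
  case False
  assume xy: "x \<le> y"
  show ?thesis
  proof (cases y rule: ennreal_cases)
    case (real b)
    then obtain a where a: "x = ennreal a" "0 \<le> a" using xy
      by (cases x rule: ennreal_cases) (auto simp: top_unique)
    with False have "0 < a" by (auto simp: less_le)
    with xy a real have "a \<le> b" by (auto simp: ennreal_le_iff)
    with \<open>0 < a\<close> a real show ?thesis
      by (simp add: inverse_ennreal ennreal_leI le_imp_inverse_le)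
  qed simp
qed

lemma mono_ennreal_measurable:
  fixes \<phi> :: "ennreal \<Rightarrow> ennreal"
  assumes "mono \<phi>"
  shows "\<phi> \<in> borel_measurable borel"
proof (rule borel_measurableI_greater)
  fix a
  let ?U = "{x. a < \<phi> x}"
  have up: "y \<in> ?U" if "u \<in> ?U" "u \<le> y" for u y
  proof -
    have "\<phi> u \<le> \<phi> y" using assms that(2) by (rule monoD)
    moreover have "a < \<phi> u" using that(1) by simp
    ultimately have "a < \<phi> y" by (metis less_le_trans)
    then show ?thesis by simp
  qed
  have sp: "{x \<in> space borel. a < \<phi> x} = ?U" by simp
  show "{x \<in> space borel. a < \<phi> x} \<in> sets borel"
    unfolding sp
  proof (cases "Inf ?U \<in> ?U")
    case True
    have "?U = {Inf ?U..}"
    proof (intro equalityI subsetI)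
      fix x assume "x \<in> ?U" then show "x \<in> {Inf ?U..}" by (metis Inf_lower atLeast_iff)
    next
      fix x assume "x \<in> {Inf ?U..}" then show "x \<in> ?U" by (metis up[OF True] atLeast_iff)
    qed
    then obtain b where "?U = {b..}" by blast
    then show "?U \<in> sets borel" by simp
  next
    case False
    have "?U = {Inf ?U<..}"
    proof (intro equalityI subsetI)
      fix x assume x: "x \<in> ?U"
      then have "Inf ?U \<le> x" by (rule Inf_lower)
      moreover have "Inf ?U \<noteq> x" using x False by metis
      ultimately show "x \<in> {Inf ?U<..}" by (metis greaterThan_iff order_le_neq_trans)
    next
      fix x assume "x \<in> {Inf ?U<..}"
      then have "Inf ?U < x" by (metis greaterThan_iff)
      then obtain u where "u \<in> ?U" "u < x" by (metis Inf_less_iff)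
      then show "x \<in> ?U" by (metis up less_imp_le)
    qed
    then obtain b where "?U = {b<..}" by blast
    then show "?U \<in> sets borel" by simp
  qed
qed

lemma ennreal_Inf_add_le:
  fixes L :: ennreal
  assumes "\<And>x y. x \<in> X \<Longrightarrow> y \<in> Y \<Longrightarrow> L \<le> x + y"
  shows "L \<le> Inf X + Inf Y"
proof (cases "X = {} \<or> Y = {}")
  case True then show ?thesis by (auto simp: top_unique)
next
  case False
  have cont: "continuous (at_right t) (\<lambda>x::ennreal. x + c)" for t c
    by (intro continuous_intros)
  have "L \<le> Inf X + y" if "y \<in> Y" for y
  proof -
    have "Inf X + y = (INF x\<in>X. x + y)"
      using continuous_at_Inf_mono[of "\<lambda>x. x + y" X] False cont
      by (auto simp: mono_def add_right_mono)
    also have "L \<le> \<dots>" using assms that by (auto intro: INF_greatest)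
    finally show ?thesis .
  qed
  moreover have "Inf X + Inf Y = (INF y\<in>Y. Inf X + y)"
    using continuous_at_Inf_mono[of "\<lambda>y. Inf X + y" Y] False cont
    by (auto simp: mono_def add_left_mono add.commute)
  ultimately show ?thesis by (auto intro: INF_greatest)
qed

lemma ennreal_cmult_Inf:
  fixes X :: "ennreal set"
  assumes "cr > 0"
  shows "ennreal cr * Inf X = Inf ((*) (ennreal cr) ` X)"
proof (rule antisym)
  show "ennreal cr * Inf X \<le> Inf ((*) (ennreal cr) ` X)"
    by (auto intro!: INF_greatest mult_left_mono Inf_lower)
  have "ennreal (1/cr) * Inf ((*) (ennreal cr) ` X) \<le> Inf X"
  proof (rule Inf_greatest)
    fix x assume "x \<in> X"
    then have "ennreal (1/cr) * Inf ((*) (ennreal cr) ` X) \<le> ennreal (1/cr) * (ennreal cr * x)"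
      by (auto intro!: mult_left_mono Inf_lower)
    also have "\<dots> = x" using assms
      by (simp add: mult.assoc[symmetric] ennreal_mult''[symmetric])
    finally show "ennreal (1/cr) * Inf ((*) (ennreal cr) ` X) \<le> x" .
  qed
  then have "ennreal cr * (ennreal (1/cr) * Inf ((*) (ennreal cr) ` X)) \<le> ennreal cr * Inf X"
    by (rule mult_left_mono) simp
  then show "Inf ((*) (ennreal cr) ` X) \<le> ennreal cr * Inf X" using assms
    by (simp add: mult.assoc[symmetric] ennreal_mult''[symmetric])
qed

lemma young_scale:
  assumes "young_function \<phi>" "0 \<le> t" "t \<le> 1"
  shows "\<phi> (ennreal t * x) \<le> ennreal t * \<phi> x"
  using assms unfolding young_function_def
  by (metis (no_types, lifting) add.right_neutral mult_zero_right)

lemma gamma_lower: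
  fixes f :: "'a::euclidean_space \<Rightarrow> ereal"
  assumes "\<And>y. f y < \<xi> \<Longrightarrow> norm y \<le> t" "0 \<le> t"
  shows "\<xi> \<le> gamma_minus f t"
  unfolding gamma_minus_def
proof (rule Sup_upper, simp)
  have "{x. f x < \<xi>} \<subseteq> cball 0 t" using assms(1) by (auto simp: mem_cball_0)
  then have "ennreal t \<in> {ennreal r |r c. 0 \<le> r \<and> {x. f x < \<xi>} \<subseteq> cball c r}"
    using assms(2) by (intro CollectI exI[of _ t] exI[of _ "0::'a"]) simp
  then have "enc_radius {x. f x < \<xi>} \<le> ennreal t"
    unfolding enc_radius_def by (rule Inf_lower)
  then show "rho_minus f \<xi> \<le> ennreal t" by (simp add: rho_minus_def)
qed

lemma check_ge_inf: "(INF x. f x) \<le> check_fun f (x::'a::euclidean_space)"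
  unfolding check_fun_def
proof (rule gamma_lower)
  fix y assume "f y < (INF x. f x)"
  moreover have "(INF x. f x) \<le> f y" by (rule INF_lower) simp
  ultimately show "norm y \<le> norm x" by (metis leD)
qed (rule norm_ge_zero)

theorem lemma21:
  fixes f :: "'a::euclidean_space \<Rightarrow> ereal"
    and c \<alpha> z r :: real
    and \<phi> \<psi> :: "ennreal \<Rightarrow> ennreal"
  defines "m \<equiv> (INF x. f x)"
    and "h \<equiv> (\<lambda>x::'a. c * norm x powr \<alpha>)"
    and "B \<equiv> ball (0::'a) r"
  assumes f_range: "\<forall>x. f x \<noteq> -\<infinity>"
    and m_fin: "m > -\<infinity>"
    and c_pos: "c > 0" and alpha_pos: "\<alpha> > 0"
    and f_ge_h: "\<exists>R. \<forall>x. norm x \<ge> R \<longrightarrow> f x \<ge> ereal (h x)"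
    and z_lt: "ereal z < m"
    and r_pos: "r > 0"
    and outside: "\<forall>x. x \<notin> B \<longrightarrow> f x \<ge> ereal (h x) \<and> h x \<ge> 2 * z"
    and young: "young_function \<phi>"
  shows "orlicz_norm \<phi> UNIV (\<lambda>x. inverse (e2ennreal (check_fun f x - ereal z)))
           \<le> 2 * orlicz_norm \<phi> (- B) (\<lambda>x. inverse (ennreal (h x)))
             + inverse (e2ennreal (m - ereal z)) * orlicz_norm \<phi> UNIV (indicator B)
       \<and> ((bij \<phi> \<and> (\<forall>y. \<psi> (\<phi> y) = y)) \<longrightarrow>
           orlicz_norm \<phi> UNIV (\<lambda>x. inverse (e2ennreal (check_fun f x - ereal z)))
           \<le> 2 * orlicz_norm \<phi> (- B) (\<lambda>x. inverse (ennreal (h x)))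
             + inverse (e2ennreal (m - ereal z)) * inverse (\<psi> (inverse (emeasure lebesgue B))))
       \<and> (orlicz_norm \<phi> (- B) (\<lambda>x. inverse (ennreal (h x))) < \<infinity> \<longrightarrow>
           orlicz_norm \<phi> UNIV (\<lambda>x. inverse (e2ennreal (check_fun f x - ereal z))) < \<infinity>)"
proof -
  define k where "k = (\<lambda>x. inverse (e2ennreal (check_fun f x - ereal z)))"
  define ih where "ih = (\<lambda>x. inverse (ennreal (h x)))"
  define a where "a = inverse (e2ennreal (m - ereal z))"
  define adm :: "'a set \<Rightarrow> ('a \<Rightarrow> ennreal) \<Rightarrow> real \<Rightarrow> bool" where "adm = (\<lambda>E g \<rho>. (\<integral>\<^sup>+x. \<phi> (ennreal (1/\<rho>) * g x) * indicator E x \<partial>lebesgue) \<le> (1::ennreal))"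
  define S1 where "S1 = {\<rho>. 0 < \<rho> \<and> adm (-B) ih \<rho>}"
  define S2 where "S2 = {\<rho>. 0 < \<rho> \<and> adm UNIV (indicator B) \<rho>}"
  define SK where "SK = {\<rho>. 0 < \<rho> \<and> adm UNIV k \<rho>}"
  define N1 where "N1 = orlicz_norm \<phi> (- B) ih"
  define N2 where "N2 = orlicz_norm \<phi> UNIV (indicator B)"
  define L where "L = orlicz_norm \<phi> UNIV k"
  have N1_eq: "N1 = Inf (ennreal ` S1)"
    unfolding N1_def S1_def orlicz_norm_def adm_def by (rule arg_cong[where f=Inf]) blast
  have N2_eq: "N2 = Inf (ennreal ` S2)"
    unfolding N2_def S2_def orlicz_norm_def adm_def by (rule arg_cong[where f=Inf]) blast
  have L_eq: "L = Inf (ennreal ` SK)"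
    unfolding L_def SK_def orlicz_norm_def adm_def by (rule arg_cong[where f=Inf]) blast
  have phi0: "\<phi> 0 = 0" and phimono: "mono \<phi>" using young by (auto simp: young_function_def)
  have phimeas[measurable]: "\<phi> \<in> borel_measurable borel"
    by (rule mono_ennreal_measurable[OF phimono])
  have B_sets[measurable]: "B \<in> sets borel" unfolding B_def by simp
  have hpos: "h x > 0" if "x \<notin> B" for x
  proof -
    have "norm x \<ge> r" using that by (simp add: B_def)
    then have "norm x > 0" using r_pos by linarith
    then have "x \<noteq> 0" by auto
    then show ?thesis using c_pos by (simp add: h_def)
  qed
  obtain ar where ar: "ar \<ge> 0" "a = ennreal ar"
  proof (cases m)
    case (real mr)
    then have "mr > z" using z_lt by simp
    then have "a = ennreal (inverse (mr - z))"
      using real by (simp add: a_def inverse_ennreal)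
    then show ?thesis using that[of "inverse (mr - z)"] \<open>mr > z\<close> by simp
  next
    case PInf
    then have "a = ennreal 0" by (simp add: a_def)
    then show ?thesis using that[of 0] by simp
  next
    case MInf
    then show ?thesis using m_fin by simp
  qed
  have kB: "k x \<le> ennreal ar" for x
  proof -
    have "m \<le> check_fun f x" unfolding m_def by (rule check_ge_inf)
    then have "m - ereal z \<le> check_fun f x - ereal z" by (rule ereal_minus_mono) simp
    then have "e2ennreal (m - ereal z) \<le> e2ennreal (check_fun f x - ereal z)" by (rule e2ennreal_mono)
    then have "k x \<le> a" unfolding k_def a_def by (rule ennreal_inverse_antimono')
    then show ?thesis using ar by simp
  qed
  have kout: "k x \<le> ennreal (2 / h x)" if x: "x \<notin> B" for x
  proof -
    have nx: "norm x \<ge> r" using x by (simp add: B_def)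
    have "ereal (h x) \<le> check_fun f x"
      unfolding check_fun_def
    proof (rule gamma_lower)
      fix y assume fy: "f y < ereal (h x)"
      show "norm y \<le> norm x"
      proof (cases "y \<in> B")
        case True then show ?thesis using nx by (simp add: B_def)
      next
        case False
        then have "ereal (h y) \<le> f y" using outside by blast
        then have "ereal (h y) < ereal (h x)" using fy by (rule le_less_trans)
        then have "h y < h x" by simp
        then have lt: "norm y powr \<alpha> < norm x powr \<alpha>" using c_pos by (simp add: h_def)
        show ?thesis
        proof (rule ccontr)
          assume "\<not> norm y \<le> norm x"
          then have "norm x \<le> norm y" by simp
          then have "norm x powr \<alpha> \<le> norm y powr \<alpha>"
            by (rule powr_mono2[OF less_imp_le[OF alpha_pos] norm_ge_zero])
          then show False using lt by simp
        qed
      qed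
    qed simp
    then have "ereal (h x) - ereal z \<le> check_fun f x - ereal z" by (rule ereal_minus_mono) simp
    moreover have "h x \<ge> 2 * z" using outside x by blast
    then have "ereal (h x / 2) \<le> ereal (h x) - ereal z" by simp
    ultimately have "ereal (h x / 2) \<le> check_fun f x - ereal z" by (rule order_trans[rotated])
    then have "e2ennreal (ereal (h x / 2)) \<le> e2ennreal (check_fun f x - ereal z)"
      by (rule e2ennreal_mono)
    then have "ennreal (h x / 2) \<le> e2ennreal (check_fun f x - ereal z)" by simp
    then have "k x \<le> inverse (ennreal (h x / 2))" unfolding k_def by (rule ennreal_inverse_antimono')
    also have "\<dots> = ennreal (2 / h x)" using hpos[OF x] by (simp add: inverse_ennreal)
    finally show ?thesis .
  qed
  have ih_eq: "ih x = ennreal (inverse (h x))" if "x \<notin> B" for x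
    using hpos[OF that] by (simp add: ih_def inverse_ennreal)
  have G1_meas: "(\<lambda>x. \<phi> (ennreal (1/r1) * ih x) * indicator (-B) x) \<in> borel_measurable lebesgue" for r1
    apply (rule measurable_completion)
    apply (subst measurable_lborel2)
    unfolding ih_def h_def by measurable
  have G2_meas: "(\<lambda>x. \<phi> (ennreal (1/r2) * indicator B x) * indicator UNIV x) \<in> borel_measurable lebesgue" for r2
    apply (rule measurable_completion)
    apply (subst measurable_lborel2)
    by measurable
  have B_leb: "B \<in> sets lebesgue" unfolding B_def by (intro fmeasurableD lmeasurable_ball)
  have Bint: "(\<integral>\<^sup>+x. \<phi> (ennreal q * indicator B x) * indicator UNIV x \<partial>lebesgue) = \<phi> (ennreal q) * emeasure lebesgue B" for q
  proof -
    have "(\<integral>\<^sup>+x. \<phi> (ennreal q * indicator B x) * indicator UNIV x \<partial>lebesgue)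
        = (\<integral>\<^sup>+x. \<phi> (ennreal q) * indicator B x \<partial>lebesgue)"
      by (rule nn_integral_cong) (simp add: indicator_def phi0)
    also have "\<dots> = \<phi> (ennreal q) * emeasure lebesgue B" using B_leb by (rule nn_integral_cmult_indicator)
    finally show ?thesis .
  qed
  have vB: "emeasure lebesgue B = ennreal (measure lborel B)" "measure lborel B > 0"
  proof -
    have "emeasure lebesgue B = emeasure lborel B" unfolding B_def by simp
    moreover have "emeasure lborel B \<noteq> top" unfolding B_def using emeasure_lborel_ball_finite[of "0::'a" r] by (simp add: less_top)
    ultimately show "emeasure lebesgue B = ennreal (measure lborel B)" by (simp add: emeasure_eq_ennreal_measure)
    show "measure lborel B > 0" unfolding B_def using content_ball_pos[OF r_pos] by simp
  qed
  have key: "adm UNIV k (2*r1 + ar*r2)"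
    if r1: "r1 \<in> S1" and r2: "0 < r2" and r2a: "ar > 0 \<Longrightarrow> r2 \<in> S2" for r1 r2
  proof -
    have r1p: "0 < r1" and r1a: "adm (-B) ih r1" using r1 by (auto simp: S1_def)
    define R where "R = 2*r1 + ar*r2"
    have arr2: "0 \<le> ar*r2" using ar(1) r2 by simp
    have Rge: "2*r1 \<le> R" using arr2 by (simp add: R_def)
    have Rpos: "R > 0" using r1p Rge by simp
    define t where "t = 2*r1/R"
    have t0: "0 \<le> t" using r1p Rpos by (simp add: t_def)
    have t1: "t \<le> 1" using Rge Rpos by (simp add: t_def)
    have t2: "0 \<le> 1 - t" "1 - t \<le> 1" using t0 t1 by simp_all
    have omt: "1 - t = ar*r2/R" using Rpos by (simp add: t_def R_def field_simps)
    define G1 where "G1 = (\<lambda>x. \<phi> (ennreal (1/r1) * ih x) * indicator (-B) x)"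
    define G2 where "G2 = (\<lambda>x. \<phi> (ennreal (1/r2) * indicator B x) * indicator (UNIV::'a set) x)"
    have G1m[measurable]: "G1 \<in> borel_measurable lebesgue" unfolding G1_def by (rule G1_meas)
    have G2m[measurable]: "G2 \<in> borel_measurable lebesgue" unfolding G2_def by (rule G2_meas)
    have pw: "\<phi> (ennreal (1/R) * k x) * indicator UNIV x \<le> ennreal t * G1 x + ennreal (1-t) * G2 x" for x
    proof (cases "x \<in> B")
      case False
      have hx: "h x > 0" using hpos[OF False] .
      have e1: "1/R * (2/h x) = t * (1/r1 * inverse (h x))"
        using Rpos r1p hx by (simp add: t_def field_simps)
      have "ennreal (1/R) * k x \<le> ennreal (1/R) * ennreal (2 / h x)"
        by (intro mult_left_mono kout False) simp
      also have "\<dots> = ennreal (1/R * (2/h x))"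
        by (rule ennreal_mult[symmetric]) (use Rpos hx in auto)
      also have "\<dots> = ennreal t * ennreal (1/r1 * inverse (h x))"
        unfolding e1 by (rule ennreal_mult) (use t0 r1p hx in auto)
      also have "ennreal (1/r1 * inverse (h x)) = ennreal (1/r1) * ih x"
        unfolding ih_eq[OF False] by (rule ennreal_mult) (use r1p hx in auto)
      finally have "\<phi> (ennreal (1/R) * k x) \<le> \<phi> (ennreal t * (ennreal (1/r1) * ih x))"
        by (rule monoD[OF phimono])
      also have "\<dots> \<le> ennreal t * \<phi> (ennreal (1/r1) * ih x)"
        by (rule young_scale[OF young t0 t1])
      also have "\<dots> = ennreal t * G1 x" using False by (simp add: G1_def)
      finally have "\<phi> (ennreal (1/R) * k x) \<le> ennreal t * G1 x" .
      then show ?thesis by (simp add: add_increasing2)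
    next
      case True
      have e1: "1/R * ar = (1-t) * (1/r2)"
        using Rpos r2 by (simp add: omt field_simps)
      have "ennreal (1/R) * k x \<le> ennreal (1/R) * ennreal ar"
        by (intro mult_left_mono kB) simp
      also have "\<dots> = ennreal (1/R * ar)"
        by (rule ennreal_mult[symmetric]) (use Rpos ar(1) in auto)
      also have "\<dots> = ennreal (1-t) * ennreal (1/r2)"
        unfolding e1 by (rule ennreal_mult) (use t2 r2 in auto)
      finally have "\<phi> (ennreal (1/R) * k x) \<le> \<phi> (ennreal (1-t) * ennreal (1/r2))"
        by (rule monoD[OF phimono])
      also have "\<dots> \<le> ennreal (1-t) * \<phi> (ennreal (1/r2))"
        by (rule young_scale[OF young t2])
      also have "\<dots> = ennreal (1-t) * G2 x" using True by (simp add: G2_def)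
      finally have "\<phi> (ennreal (1/R) * k x) \<le> ennreal (1-t) * G2 x" .
      then show ?thesis by (simp add: add_increasing)
    qed
    have "(\<integral>\<^sup>+x. \<phi> (ennreal (1/R) * k x) * indicator UNIV x \<partial>lebesgue)
        \<le> (\<integral>\<^sup>+x. ennreal t * G1 x + ennreal (1-t) * G2 x \<partial>lebesgue)"
      by (rule nn_integral_mono) (rule pw)
    also have "\<dots> = (\<integral>\<^sup>+x. ennreal t * G1 x \<partial>lebesgue) + (\<integral>\<^sup>+x. ennreal (1-t) * G2 x \<partial>lebesgue)"
      by (rule nn_integral_add) measurable
    also have "\<dots> = ennreal t * (\<integral>\<^sup>+x. G1 x \<partial>lebesgue) + ennreal (1-t) * (\<integral>\<^sup>+x. G2 x \<partial>lebesgue)"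
      by (simp add: nn_integral_cmult[OF G1m] nn_integral_cmult[OF G2m])
    also have "\<dots> \<le> ennreal t * 1 + ennreal (1-t) * 1"
    proof (rule add_mono)
      have "(\<integral>\<^sup>+x. G1 x \<partial>lebesgue) \<le> 1" using r1a by (simp add: adm_def G1_def)
      then show "ennreal t * (\<integral>\<^sup>+x. G1 x \<partial>lebesgue) \<le> ennreal t * 1" by (rule mult_left_mono) simp
      show "ennreal (1-t) * (\<integral>\<^sup>+x. G2 x \<partial>lebesgue) \<le> ennreal (1-t) * 1"
      proof (cases "ar > 0")
        case True
        then have "adm UNIV (indicator B) r2" using r2a by (simp add: S2_def)
        then have "(\<integral>\<^sup>+x. G2 x \<partial>lebesgue) \<le> 1" by (simp add: adm_def G2_def)
        then show ?thesis by (rule mult_left_mono) simp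
      next
        case False
        then have "ar = 0" using ar(1) by simp
        then have "1 - t = 0" using omt by simp
        then show ?thesis by simp
      qed
    qed
    also have "\<dots> = 1" using t0 t2 by (simp add: ennreal_plus[symmetric] del: ennreal_plus)
    finally show ?thesis unfolding adm_def R_def .
  qed
  have part1: "L \<le> 2 * N1 + a * N2"
  proof (cases "ar > 0")
    case False
    then have ar0: "ar = 0" using ar by simp
    have "L \<le> Inf ((*) (ennreal 2) ` ennreal ` S1)"
    proof (rule Inf_greatest)
      fix y assume "y \<in> (*) (ennreal 2) ` ennreal ` S1"
      then obtain r1 where r1: "r1 \<in> S1" "y = ennreal 2 * ennreal r1" by blast
      have "r1 > 0" using r1 by (simp add: S1_def)
      have "adm UNIV k (2*r1 + ar*1)" using key[OF r1(1), of 1] ar0 by simp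
      then have "2*r1 + ar*1 \<in> SK" using \<open>r1 > 0\<close> ar0 by (simp add: SK_def)
      then have "L \<le> ennreal (2*r1 + ar*1)" unfolding L_eq by (rule Inf_lower[OF imageI])
      also have "ennreal (2*r1 + ar*1) = ennreal 2 * ennreal r1"
        using ar0 ennreal_mult[of 2 r1] \<open>r1 > 0\<close> by simp
      finally show "L \<le> y" using r1(2) by simp
    qed
    also have "\<dots> = ennreal 2 * N1" unfolding N1_eq by (rule ennreal_cmult_Inf[symmetric]) simp
    finally show ?thesis by (simp add: add_increasing2)
  next
    case True
    have "L \<le> Inf ((*) (ennreal 2) ` ennreal ` S1) + Inf ((*) (ennreal ar) ` ennreal ` S2)"
    proof (rule ennreal_Inf_add_le)
      fix x y assume "x \<in> (*) (ennreal 2) ` ennreal ` S1" "y \<in> (*) (ennreal ar) ` ennreal ` S2"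
      then obtain r1 r2 where r1: "r1 \<in> S1" "x = ennreal 2 * ennreal r1"
        and r2: "r2 \<in> S2" "y = ennreal ar * ennreal r2" by blast
      have "r1 > 0" "r2 > 0" using r1 r2 by (auto simp: S1_def S2_def)
      have "adm UNIV k (2*r1 + ar*r2)" using key[OF r1(1) \<open>r2 > 0\<close>] r2 by simp
      then have "2*r1 + ar*r2 \<in> SK" using \<open>r1 > 0\<close> \<open>r2 > 0\<close> ar(1)
        by (simp add: SK_def add_pos_nonneg)
      then have "L \<le> ennreal (2*r1 + ar*r2)" unfolding L_eq by (rule Inf_lower[OF imageI])
      also have "ennreal (2*r1 + ar*r2) = ennreal (2*r1) + ennreal (ar*r2)"
        by (rule ennreal_plus) (use \<open>r1 > 0\<close> \<open>r2 > 0\<close> ar(1) in auto)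
      also have "ennreal (2*r1) = ennreal 2 * ennreal r1"
        by (rule ennreal_mult) (use \<open>r1 > 0\<close> in auto)
      also have "ennreal (ar*r2) = ennreal ar * ennreal r2"
        by (rule ennreal_mult) (use \<open>r2 > 0\<close> ar(1) in auto)
      finally show "L \<le> x + y" using r1(2) r2(2) by simp
    qed
    also have "\<dots> = ennreal 2 * N1 + ennreal ar * N2"
    proof -
      have e1: "Inf ((*) (ennreal 2) ` ennreal ` S1) = ennreal 2 * N1"
        unfolding N1_eq by (rule ennreal_cmult_Inf[symmetric]) simp
      have e2: "Inf ((*) (ennreal ar) ` ennreal ` S2) = ennreal ar * N2"
        unfolding N2_eq by (rule ennreal_cmult_Inf[symmetric]) (use True in simp)
      show ?thesis by (simp only: e1 e2)
    qed
    finally show ?thesis using ar by simp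
  qed
  have part2: "L \<le> 2 * N1 + a * inverse (\<psi> (inverse (emeasure lebesgue B)))"
    if bij: "bij \<phi>" and psi: "\<forall>y. \<psi> (\<phi> y) = y"
  proof -
    define v where "v = emeasure lebesgue B"
    have v0: "v \<noteq> 0" "v \<noteq> top" using vB by (simp_all add: v_def)
    define w where "w = inverse v"
    have w0: "w \<noteq> 0" "w \<noteq> top" using v0 by (simp_all add: w_def)
    have surj: "surj \<phi>" using bij by (rule bij_is_surj)
    obtain s where s: "\<phi> s = w" using surjD[OF surj, of w] by blast
    have psiw: "\<psi> w = s" using psi s by metis
    obtain y0 where "top = \<phi> y0" using surjD[OF surj, of top] by (elim exE)
    then have "\<phi> y0 = top" by simp
    then have phitop: "\<phi> top = top" using monoD[OF phimono, of y0 top] by (simp add: top_unique)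
    have "s \<noteq> top" using s phitop w0 by auto
    moreover have "s \<noteq> 0" using s phi0 w0 by auto
    ultimately obtain sr where sr: "s = ennreal sr" "sr > 0"
      by (cases s rule: ennreal_cases) (auto simp: less_le)
    have "(\<integral>\<^sup>+x. \<phi> (ennreal (1/(1/sr)) * indicator B x) * indicator UNIV x \<partial>lebesgue) = w * v"
      using Bint[of sr] sr s by (simp add: v_def)
    also have "\<dots> = v / v" by (simp add: w_def divide_ennreal_def mult.commute)
    also have "\<dots> = 1" using v0 by (simp add: ennreal_divide_self less_top)
    finally have "1/sr \<in> S2" using sr by (simp add: S2_def adm_def)
    then have "N2 \<le> ennreal (1/sr)" unfolding N2_eq by (rule Inf_lower[OF imageI])
    also have "\<dots> = inverse (\<psi> (inverse (emeasure lebesgue B)))"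
      using sr psiw by (simp add: w_def v_def inverse_ennreal divide_inverse)
    finally have "N2 \<le> inverse (\<psi> (inverse (emeasure lebesgue B)))" .
    then have "2 * N1 + a * N2 \<le> 2 * N1 + a * inverse (\<psi> (inverse (emeasure lebesgue B)))"
      by (intro add_left_mono mult_left_mono) (simp_all add: zero_le)
    then show ?thesis using part1 by (rule order_trans[rotated])
  qed
  have part3: "L < \<infinity>" if fin: "N1 < \<infinity>"
  proof -
    have "S1 \<noteq> {}" using fin by (auto simp: N1_eq)
    then obtain r1 where r1: "r1 \<in> S1" by blast
    have r1p: "r1 > 0" and r1a: "adm (-B) ih r1" using r1 by (auto simp: S1_def)
    obtain b :: 'a where b: "b \<in> Basis" using nonempty_Basis by blast
    define x0 where "x0 = (r+1) *\<^sub>R b"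
    have nx0: "norm x0 = r + 1" using b r_pos by (simp add: x0_def)
    define D where "D = ball x0 (1/2)"
    define H where "H = c * (r + 2) powr \<alpha>"
    have Hpos: "H > 0" using c_pos r_pos by (simp add: H_def)
    have Dprop: "y \<notin> B \<and> h y \<le> H" if "y \<in> D" for y
    proof -
      have "dist x0 y < 1/2" using that by (simp add: D_def)
      then have "norm (x0 - y) < 1/2" by (simp add: dist_norm)
      moreover have "norm x0 \<le> norm y + norm (x0 - y)" using norm_triangle_ineq4[of x0 y] norm_minus_commute
        by (metis add.commute norm_diff_triangle_ineq diff_add_cancel norm_triangle_ineq)
      moreover have "norm y \<le> norm x0 + norm (x0 - y)"
        by (metis add.commute diff_add_cancel norm_minus_commute norm_triangle_ineq)
      ultimately have ny: "r < norm y" "norm y \<le> r + 2" using nx0 by linarith+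
      then have "y \<notin> B" by (simp add: B_def)
      moreover have "norm y powr \<alpha> \<le> (r+2) powr \<alpha>"
        using ny by (intro powr_mono2) (use alpha_pos in auto)
      then have "h y \<le> H" using c_pos by (simp add: h_def H_def)
      ultimately show ?thesis by simp
    qed
    define M where "M = \<phi> (ennreal (1/r1 * (1/H)))"
    have "(\<integral>\<^sup>+x. M * indicator D x \<partial>lebesgue) \<le> (\<integral>\<^sup>+x. \<phi> (ennreal (1/r1) * ih x) * indicator (-B) x \<partial>lebesgue)"
    proof (rule nn_integral_mono)
      fix y
      show "M * indicator D y \<le> \<phi> (ennreal (1/r1) * ih y) * indicator (-B) y"
      proof (cases "y \<in> D")
        case True
        with Dprop have yB: "y \<notin> B" and hy: "h y \<le> H" by auto
        have hy0: "h y > 0" using hpos[OF yB] .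
        have "1/r1 * (1/H) \<le> 1/r1 * inverse (h y)"
          using hy hy0 r1p by (intro mult_left_mono) (simp_all add: field_simps)
        then have "ennreal (1/r1 * (1/H)) \<le> ennreal (1/r1) * ih y"
          using ih_eq[OF yB] r1p hy0 by (simp add: ennreal_mult[symmetric])
        then have "M \<le> \<phi> (ennreal (1/r1) * ih y)" unfolding M_def by (rule monoD[OF phimono])
        then show ?thesis using True yB by simp
      qed simp
    qed
    also have "\<dots> \<le> 1" using r1a by (simp add: adm_def)
    finally have M1: "M * emeasure lebesgue D \<le> 1"
      using nn_integral_cmult_indicator[of D lebesgue M] by (simp add: D_def)
    have mD: "emeasure lebesgue D \<noteq> 0"
    proof -
      have "emeasure lebesgue D = emeasure lborel D" unfolding D_def by simp
      moreover have "emeasure lborel D \<noteq> top" unfolding D_def using emeasure_lborel_ball_finite[of x0 "1/2"] by (simp add: less_top)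
      ultimately have "emeasure lebesgue D = ennreal (measure lborel D)" by (simp add: emeasure_eq_ennreal_measure)
      moreover have "measure lborel D > 0" unfolding D_def using content_ball_pos[of "1/2" x0] by simp
      ultimately show ?thesis by simp
    qed
    have "M \<noteq> top"
    proof
      assume "M = top"
      then have "M * emeasure lebesgue D = top" using mD by (simp add: ennreal_mult_top)
      then show False using M1 by (simp add: top_unique)
    qed
    then obtain Mr where Mr: "M = ennreal Mr" "Mr \<ge> 0" by (cases M rule: ennreal_cases) auto
    define vr where "vr = measure lborel B"
    have vr: "vr > 0" "emeasure lebesgue B = ennreal vr" using vB by (simp_all add: vr_def)
    define \<delta> where "\<delta> = 1/r1 * (1/H)"
    have \<delta>pos: "\<delta> > 0" using r1p Hpos by (simp add: \<delta>_def)
    define tt where "tt = 1 / (1 + Mr * vr)"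
    have mv: "0 \<le> Mr * vr" using Mr(2) vr(1) by simp
    have p1: "0 < 1 + Mr * vr" using mv by linarith
    have tt: "0 < tt" "tt \<le> 1" using p1 mv by (simp_all add: tt_def divide_le_eq)
    have ttb: "tt * Mr * vr \<le> 1" using p1 by (simp add: tt_def field_simps)
    define \<rho> where "\<rho> = 1 / (tt * \<delta>)"
    have \<rho>pos: "\<rho> > 0" using tt \<delta>pos by (simp add: \<rho>_def)
    have "(\<integral>\<^sup>+x. \<phi> (ennreal (1/\<rho>) * indicator B x) * indicator UNIV x \<partial>lebesgue) = \<phi> (ennreal (tt * \<delta>)) * ennreal vr"
      using Bint[of "1/\<rho>"] vr by (simp add: \<rho>_def)
    also have "\<dots> \<le> (ennreal tt * M) * ennreal vr"
    proof (rule mult_right_mono)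
      have "\<phi> (ennreal (tt * \<delta>)) = \<phi> (ennreal tt * ennreal \<delta>)" using ennreal_mult[of tt \<delta>] tt \<delta>pos by simp
      also have "\<dots> \<le> ennreal tt * \<phi> (ennreal \<delta>)" using tt by (intro young_scale[OF young]) simp_all
      finally show "\<phi> (ennreal (tt * \<delta>)) \<le> ennreal tt * M" by (simp add: M_def \<delta>_def)
    qed simp
    also have "\<dots> = ennreal (tt * Mr * vr)" using tt Mr vr by (simp add: ennreal_mult)
    also have "\<dots> \<le> 1" using ttb by simp
    finally have "\<rho> \<in> S2" using \<rho>pos by (simp add: S2_def adm_def)
    then have "N2 \<le> ennreal \<rho>" unfolding N2_eq by (rule Inf_lower[OF imageI])
    then have "N2 < \<infinity>" using le_less_trans by fastforce
    then have "2 * N1 + a * N2 < \<infinity>" using fin ar by (simp add: ennreal_mult_less_top)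
    then show ?thesis using part1 by (rule le_less_trans[rotated])
  qed
  show ?thesis
    using part1 part2 part3 unfolding L_def N1_def N2_def a_def k_def ih_def by blast
qed

end
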